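(* Let $n\in\mathbb{N}$ and let $\mathcal{F}_1,\dots,\mathcal{F}_{n+1}$ be non-empty collections of closed intervals in $\mathbb{R}$ such that every colorful $(n+1)$-tuple is $n$-pierceable. Then there exist $i\in[n+1]$ and, for every $k\in[n+1]$ with $k\neq i$, an interval $F_k\in\mathcal{F}_k$ such that $\mathcal{F}_i\cup\{F_k: k\in[n+1],\,k\neq i\}$ is $n$-pierceable.
   Context: A family $\mathcal{F}$ of subsets of $\mathbb{R}$ is $n$-pierceable if there is $A\subseteq\mathbb{R}$ with $|A|\le n$ meeting every member of $\mathcal{F}$. A colorful $(n+1)$-tuple from $\mathcal{F}_1,\dots,\mathcal{F}_{n+1}$ is a tuple $(C_1,\dots,C_{n+1})$ with $C_j\in\mathcal{F}_{i_j}$ for pairwise distinct indices $i_1,\dots,i_{n+1}$ (i.e., one member from each family). *)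

theory Defs
  imports Main Complex_Main
begin

definition pierceable :: "nat \<Rightarrow> real set set \<Rightarrow> bool" where
  "pierceable n \<F> \<longleftrightarrow> (\<exists>A. finite A \<and> card A \<le> n \<and> (\<forall>S\<in>\<F>. A \<inter> S \<noteq> {}))"

definition closed_interval :: "real set \<Rightarrow> bool" where
  "closed_interval S \<longleftrightarrow> (\<exists>a b. a \<le> b \<and> S = {a..b})"

end

theory Submission
  imports Defs
begin


lemma ci_props:
  assumes "closed_interval S"
  shows "Inf S \<le> Sup S" "S = {Inf S..Sup S}" "Inf S \<in> S"
    "\<And>x. x \<in> S \<longleftrightarrow> Inf S \<le> x \<and> x \<le> Sup S"
proof -
  obtain a b where ab: "a \<le> b" "S = {a..b}" using assms unfolding closed_interval_def by blast
  then show "Inf S \<le> Sup S" "S = {Inf S..Sup S}" "Inf S \<in> S"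
    "\<And>x. x \<in> S \<longleftrightarrow> Inf S \<le> x \<and> x \<le> Sup S" by auto
qed

lemma step:
  fixes n :: nat and F F' :: "nat \<Rightarrow> real set set" and I :: "nat set"
  assumes IH: "\<forall>(I::nat set) (F::nat \<Rightarrow> real set set). finite I \<and> card I = n+1 \<and> (\<forall>i\<in>I. \<forall>S\<in>F i. closed_interval S)
      \<and> (\<forall>i\<in>I. F i \<noteq> {}) \<and> (\<forall>C. (\<forall>i\<in>I. C i \<in> F i) \<longrightarrow> pierceable n (C ` I))
      \<longrightarrow> (\<exists>i\<in>I. \<exists>G. (\<forall>k\<in>I-{i}. G k \<in> F k) \<and> pierceable n (F i \<union> G ` (I-{i})))"
    and fin: "finite I" and cardI: "card I = Suc n + 1"
    and intervals: "\<forall>i\<in>I. \<forall>S\<in>F i. closed_interval S"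
    and nonempty: "\<forall>i\<in>I. F i \<noteq> {}"
    and colorful: "\<forall>C. (\<forall>i\<in>I. C i \<in> F i) \<longrightarrow> pierceable (Suc n) (C ` I)"
    and aI: "a \<in> I"
    and sub: "\<forall>k\<in>I-{a}. F' k \<subseteq> F k"
    and disj: "\<forall>C. (\<forall>k\<in>I-{a}. C k \<in> F' k) \<longrightarrow> (\<exists>J\<in>F a. \<forall>k\<in>I-{a}. J \<inter> C k = {})"
    and ext: "\<forall>k\<in>I-{a}. \<exists>Ga\<in>F a. \<exists>q\<in>Ga. \<forall>M\<in>F k - F' k. q \<in> M"
  shows "\<exists>i\<in>I. \<exists>G. (\<forall>k\<in>I-{i}. G k \<in> F k) \<and> pierceable (Suc n) (F i \<union> G ` (I-{i}))"
proof (cases "\<exists>k\<in>I-{a}. F' k = {}")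
  case True
  then obtain k where k: "k \<in> I" "k \<noteq> a" "F' k = {}" by blast
  from ext k obtain Ga q where Ga: "Ga \<in> F a" "q \<in> Ga" and qM0: "\<forall>M\<in>F k - F' k. q \<in> M" by blast
  have qM: "\<forall>M\<in>F k. q \<in> M" using qM0 k(3) by simp
  define G where "G = (\<lambda>j. if j = a then Ga else (SOME S. S \<in> F j))"
  have GF: "\<forall>j\<in>I. G j \<in> F j"
  proof
    fix j assume j: "j \<in> I"
    show "G j \<in> F j"
    proof (cases "j = a")
      case True then show ?thesis using Ga by (simp add: G_def)
    next
      case False
      from nonempty j have "\<exists>S. S \<in> F j" by auto
      then show ?thesis using False by (auto simp: G_def some_in_eq)
    qed
  qed
  define pt where "pt = (\<lambda>j. Inf (G j))"
  have ptG: "\<forall>j\<in>I. pt j \<in> G j" using GF intervals ci_props(3) by (simp add: pt_def)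
  have c2: "card (I - {a,k}) = n"
  proof -
    have "card (I - {a,k}) = card I - card {a,k}" using k aI fin by (intro card_Diff_subset) auto
    then show ?thesis using cardI k by auto
  qed
  have "pierceable (Suc n) (F k \<union> G ` (I - {k}))"
    unfolding pierceable_def
  proof (intro exI conjI)
    let ?A = "insert q (pt ` (I - {a,k}))"
    show "finite ?A" using fin by auto
    have "card ?A \<le> Suc (card (pt ` (I - {a,k})))" by (simp add: card_insert_le_m1)
    also have "\<dots> \<le> Suc (card (I - {a,k}))" using card_image_le fin by auto
    finally show "card ?A \<le> Suc n" using c2 by simp
    show "\<forall>S\<in>F k \<union> G ` (I - {k}). ?A \<inter> S \<noteq> {}"
    proof
      fix S assume S: "S \<in> F k \<union> G ` (I - {k})"
      show "?A \<inter> S \<noteq> {}"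
      proof (cases "S \<in> F k")
        case True then show ?thesis using qM by auto
      next
        case False
        then obtain j where j: "j \<in> I" "j \<noteq> k" "S = G j" using S by auto
        show ?thesis
        proof (cases "j = a")
          case True then show ?thesis using j Ga by (auto simp: G_def)
        next
          case False
          then have "pt j \<in> ?A" using j by auto
          then show ?thesis using ptG j by auto
        qed
      qed
    qed
  qed
  then show ?thesis using k GF by blast
next
  case False
  then have ne': "\<forall>k\<in>I-{a}. F' k \<noteq> {}" by blast
  have col': "\<forall>C. (\<forall>i\<in>I-{a}. C i \<in> F' i) \<longrightarrow> pierceable n (C ` (I-{a}))"
  proof (intro allI impI)
    fix C assume C: "\<forall>i\<in>I-{a}. C i \<in> F' i"
    from disj C obtain J where J: "J \<in> F a" "\<forall>k\<in>I-{a}. J \<inter> C k = {}" by blast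
    have "\<forall>i\<in>I. (C(a:=J)) i \<in> F i" using C J sub by fastforce
    with colorful have "pierceable (Suc n) ((C(a:=J)) ` I)" by blast
    then obtain A where A: "finite A" "card A \<le> Suc n" "\<forall>S\<in>(C(a:=J)) ` I. A \<inter> S \<noteq> {}"
      unfolding pierceable_def by blast
    from A(3) aI have "A \<inter> J \<noteq> {}" by auto
    then obtain x where x: "x \<in> A" "x \<in> J" by auto
    show "pierceable n (C ` (I-{a}))" unfolding pierceable_def
    proof (intro exI conjI)
      show "finite (A - {x})" using A by auto
      show "card (A - {x}) \<le> n" using A x by auto
      show "\<forall>S\<in>C ` (I - {a}). (A - {x}) \<inter> S \<noteq> {}"
      proof
        fix S assume "S \<in> C ` (I - {a})"
        then obtain k where k: "k \<in> I" "k \<noteq> a" "S = C k" by auto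
        have "A \<inter> C k \<noteq> {}" using A(3) k by force
        moreover have "x \<notin> C k" using J k x by auto
        ultimately show "(A - {x}) \<inter> S \<noteq> {}" using k by auto
      qed
    qed
  qed
  have "\<exists>i\<in>I-{a}. \<exists>G. (\<forall>k\<in>(I-{a})-{i}. G k \<in> F' k) \<and> pierceable n (F' i \<union> G ` ((I-{a})-{i}))"
  proof (rule IH[rule_format, of "I-{a}" F'], intro conjI)
    show "finite (I - {a})" using fin by auto
    show "card (I - {a}) = n + 1" using cardI aI fin by auto
    show "\<forall>i\<in>I - {a}. \<forall>S\<in>F' i. closed_interval S" using intervals sub by blast
  qed (use ne' col' in auto)
  then obtain i G where i: "i \<in> I" "i \<noteq> a" and G: "\<forall>k\<in>(I-{a})-{i}. G k \<in> F' k"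
    and P: "pierceable n (F' i \<union> G ` ((I-{a})-{i}))" by blast
  from P obtain A where A: "finite A" "card A \<le> n" "\<forall>S\<in>F' i \<union> G ` ((I-{a})-{i}). A \<inter> S \<noteq> {}"
    unfolding pierceable_def by blast
  from ext i obtain Ga q where Ga: "Ga \<in> F a" "q \<in> Ga" and qM: "\<forall>M\<in>F i - F' i. q \<in> M" by blast
  define G2 where "G2 = G(a:=Ga)"
  have G2F: "\<forall>k\<in>I-{i}. G2 k \<in> F k" using G Ga sub by (auto simp: G2_def)
  have "pierceable (Suc n) (F i \<union> G2 ` (I - {i}))"
    unfolding pierceable_def
  proof (intro exI conjI)
    show "finite (insert q A)" using A by auto
    show "card (insert q A) \<le> Suc n" using A by (simp add: card_insert_if)
    show "\<forall>S\<in>F i \<union> G2 ` (I - {i}). insert q A \<inter> S \<noteq> {}"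
    proof
      fix S assume S: "S \<in> F i \<union> G2 ` (I - {i})"
      show "insert q A \<inter> S \<noteq> {}"
      proof (cases "S \<in> F i")
        case True
        then show ?thesis using qM A(3) by (cases "S \<in> F' i") auto
      next
        case False
        then obtain j where j: "j \<in> I" "j \<noteq> i" "S = G2 j" using S by auto
        show ?thesis
        proof (cases "j = a")
          case True then show ?thesis using j Ga by (auto simp: G2_def)
        next
          case False
          then have "A \<inter> G j \<noteq> {}" using A(3) j by auto
          then show ?thesis using j False by (auto simp: G2_def)
        qed
      qed
    qed
  qed
  then show ?thesis using i G2F by blast
qed



lemma disjL:
  fixes C :: "nat \<Rightarrow> real set" and t :: real
  assumes K: "finite K" and CK: "\<forall>k\<in>K. closed_interval (C k) \<and> t < Inf (C k)"
    and low: "\<forall>x>t. \<exists>J\<in>Fa. Sup J < x" and Fa: "\<forall>J\<in>Fa. closed_interval J"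
  shows "\<exists>J\<in>Fa. \<forall>k\<in>K. J \<inter> C k = {}"
proof -
  define x where "x = Min (insert (t+1) ((\<lambda>k. Inf (C k)) ` K))"
  have fx: "finite (insert (t+1) ((\<lambda>k. Inf (C k)) ` K))" using K by auto
  have "t < x" unfolding x_def using fx CK by (subst Min_gr_iff) auto
  then obtain J where J: "J \<in> Fa" "Sup J < x" using low by blast
  have xle: "\<forall>k\<in>K. x \<le> Inf (C k)" unfolding x_def using fx by (auto intro: Min_le)
  have "\<forall>k\<in>K. J \<inter> C k = {}"
  proof (intro ballI equalityI subsetI)
    fix k y assume k: "k \<in> K" and y: "y \<in> J \<inter> C k"
    have "y \<le> Sup J" using y Fa J ci_props(4) by blast
    moreover have "Inf (C k) \<le> y" using y CK k ci_props(4) by blast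
    ultimately show "y \<in> {}" using xle k J by force
  qed simp
  then show ?thesis using J by blast
qed

lemma gen:
  fixes n :: nat and F :: "nat \<Rightarrow> real set set" and I :: "nat set"
  shows "finite I \<Longrightarrow> card I = n+1 \<Longrightarrow> (\<forall>i\<in>I. \<forall>S\<in>F i. closed_interval S)
      \<Longrightarrow> (\<forall>i\<in>I. F i \<noteq> {}) \<Longrightarrow> (\<forall>C. (\<forall>i\<in>I. C i \<in> F i) \<longrightarrow> pierceable n (C ` I))
      \<Longrightarrow> \<exists>i\<in>I. \<exists>G. (\<forall>k\<in>I-{i}. G k \<in> F k) \<and> pierceable n (F i \<union> G ` (I-{i}))"
proof (induction n arbitrary: I F)
  case 0
  then obtain i where I: "I = {i}" by (auto simp: card_Suc_eq)
  define C where "C = (\<lambda>j. SOME S. S \<in> F j)"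
  have "C i \<in> F i" using 0(4) I by (auto simp: C_def some_in_eq)
  then have "pierceable 0 (C ` I)" using 0(5) I by auto
  then show ?case unfolding pierceable_def using I by auto
next
  case (Suc n)
  note fin = Suc.prems(1) and cardI = Suc.prems(2) and intervals = Suc.prems(3)
    and nonempty = Suc.prems(4) and colorful = Suc.prems(5)
  have IH: "\<forall>(I::nat set) (F::nat \<Rightarrow> real set set). finite I \<and> card I = n+1 \<and> (\<forall>i\<in>I. \<forall>S\<in>F i. closed_interval S)
      \<and> (\<forall>i\<in>I. F i \<noteq> {}) \<and> (\<forall>C. (\<forall>i\<in>I. C i \<in> F i) \<longrightarrow> pierceable n (C ` I))
      \<longrightarrow> (\<exists>i\<in>I. \<exists>G. (\<forall>k\<in>I-{i}. G k \<in> F k) \<and> pierceable n (F i \<union> G ` (I-{i})))"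
    apply (intro allI impI, elim conjE) apply (rule Suc.IH) apply assumption+ done
  note stp = step[where n=n and I=I and F=F, OF IH fin cardI intervals nonempty colorful]
  show ?case
  proof (cases "\<exists>a\<in>I. \<not> bdd_below ((Sup :: real set \<Rightarrow> real) ` F a)")
    case True
    then obtain a where a: "a \<in> I" "\<not> bdd_below ((Sup :: real set \<Rightarrow> real) ` F a)" by (elim bexE) auto
    have low: "\<forall>x. \<exists>J\<in>F a. Sup J < x" using a(2) unfolding bdd_below_def
      by (auto simp: not_le)
    show ?thesis
    proof (rule stp[OF a(1), of F])
      show "\<forall>C. (\<forall>k\<in>I-{a}. C k \<in> F k) \<longrightarrow> (\<exists>J\<in>F a. \<forall>k\<in>I-{a}. J \<inter> C k = {})"
      proof (intro allI impI)
        fix C assume C: "\<forall>k\<in>I-{a}. C k \<in> F k"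
        define t where "t = Min (insert 0 ((\<lambda>k. Inf (C k)) ` (I-{a}))) - 1"
        have fx: "finite (insert 0 ((\<lambda>k. Inf (C k)) ` (I-{a})))" using fin by auto
        have tC: "\<forall>k\<in>I-{a}. t < Inf (C k)"
        proof
          fix k assume "k \<in> I-{a}"
          then have "Min (insert 0 ((\<lambda>k. Inf (C k)) ` (I-{a}))) \<le> Inf (C k)"
            using fx by (intro Min_le) auto
          then show "t < Inf (C k)" by (simp add: t_def)
        qed
        show "\<exists>J\<in>F a. \<forall>k\<in>I-{a}. J \<inter> C k = {}"
        proof (rule disjL[of "I-{a}" C t "F a"])
          show "finite (I - {a})" using fin by simp
        next
          show "\<forall>k\<in>I - {a}. closed_interval (C k) \<and> t < Inf (C k)" using tC C intervals by auto
        next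
          show "\<forall>x>t. \<exists>J\<in>F a. Sup J < x" using low by blast
          show "\<forall>J\<in>F a. closed_interval J" using intervals a(1) by blast
        qed
      qed
      show "\<forall>k\<in>I-{a}. \<exists>Ga\<in>F a. \<exists>q\<in>Ga. \<forall>M\<in>F k - F k. q \<in> M"
      proof -
        obtain Ga where Ga: "Ga \<in> F a" using nonempty a(1) by blast
        then have "Inf Ga \<in> Ga" using intervals a(1) ci_props(3) by blast
        then show ?thesis using Ga by blast
      qed
    qed auto
  next
    case False
    then have bdd: "\<forall>k\<in>I. bdd_below ((Sup :: real set \<Rightarrow> real) ` F k)" by auto
    define pk where "pk = (\<lambda>k. Inf ((Sup :: real set \<Rightarrow> real) ` F k))"
    define p where "p = Min (pk ` I)"
    have Ine: "I \<noteq> {}" using cardI by auto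
    have pmin: "\<forall>k\<in>I. p \<le> pk k" unfolding p_def using fin by auto
    have pkS: "\<forall>k\<in>I. \<forall>S\<in>F k. pk k \<le> Sup S"
      unfolding pk_def using bdd by (auto intro: cInf_lower)
    have hR: "\<forall>k\<in>I. \<forall>S\<in>F k. p \<le> Sup S" using pmin pkS by force
    have lowk: "\<forall>k\<in>I. pk k = p \<longrightarrow> (\<forall>x>p. \<exists>S\<in>F k. Sup S < x)"
    proof (intro ballI impI allI)
      fix k x assume k: "k \<in> I" "pk k = p" "p < x"
      then have "Inf (Sup ` F k) < x" by (simp add: pk_def)
      then show "\<exists>S\<in>F k. Sup S < x" using cInf_less_iff[of "Sup ` F k" x] bdd nonempty k by auto
    qed
    define F' where "F' = (\<lambda>k. {S\<in>F k. p \<notin> S})"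
    have F'inf: "\<forall>k\<in>I. \<forall>S\<in>F' k. p < Inf S"
    proof (intro ballI)
      fix k S assume k: "k \<in> I" and S: "S \<in> F' k"
      then have "S \<in> F k" "p \<notin> S" by (auto simp: F'_def)
      then show "p < Inf S" using hR k intervals ci_props(4)[of S p] by force
    qed
    have disjP: "\<forall>C. (\<forall>k\<in>I-{a}. C k \<in> F' k) \<longrightarrow> (\<exists>J\<in>F a. \<forall>k\<in>I-{a}. J \<inter> C k = {})"
      if a: "a \<in> I" "pk a = p" for a
    proof (intro allI impI)
      fix C assume C: "\<forall>k\<in>I-{a}. C k \<in> F' k"
      have "\<forall>k\<in>I-{a}. closed_interval (C k) \<and> p < Inf (C k)"
        using C F'inf intervals by (auto simp: F'_def)
      then show "\<exists>J\<in>F a. \<forall>k\<in>I-{a}. J \<inter> C k = {}"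
        using disjL[of "I-{a}" C p "F a"] fin intervals a lowk by blast
    qed
    have sub: "\<forall>k\<in>I-{a}. F' k \<subseteq> F k" for a by (auto simp: F'_def)
    show ?thesis
    proof (cases "\<exists>a\<in>I. pk a = p \<and> (\<exists>J\<in>F a. p \<in> J)")
      case True
      then obtain a J where a: "a \<in> I" "pk a = p" "J \<in> F a" "p \<in> J" by blast
      show ?thesis
      proof (rule stp[OF a(1) sub disjP[OF a(1,2)]])
        show "\<forall>k\<in>I-{a}. \<exists>Ga\<in>F a. \<exists>q\<in>Ga. \<forall>M\<in>F k - F' k. q \<in> M"
          using a by (auto simp: F'_def)
      qed
    next
      case False
      have "p \<in> pk ` I" unfolding p_def using fin Ine by (intro Min_in) auto
      then obtain a where a: "a \<in> I" "pk a = p" by auto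
      have noa: "\<forall>J\<in>F a. p \<notin> J" using False a by blast
      show ?thesis
      proof (rule stp[OF a(1) sub disjP[OF a(1,2)]])
        show "\<forall>k\<in>I-{a}. \<exists>Ga\<in>F a. \<exists>q\<in>Ga. \<forall>M\<in>F k - F' k. q \<in> M"
        proof
          fix k assume k: "k \<in> I-{a}"
          define Mk where "Mk = {S\<in>F k. p \<in> S}"
          have Mk: "F k - F' k = Mk" by (auto simp: F'_def Mk_def)
          show "\<exists>Ga\<in>F a. \<exists>q\<in>Ga. \<forall>M\<in>F k - F' k. q \<in> M"
          proof (cases "Mk = {}")
            case True
            obtain Ga where "Ga \<in> F a" using nonempty a by blast
            then show ?thesis using Mk True intervals a ci_props(3) by blast
          next
            case Mne: False
            define r where "r = Inf (Sup ` Mk)"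
            have rge: "p \<le> r" unfolding r_def using Mne hR k
              by (intro cInf_greatest) (auto simp: Mk_def)
            have "r \<noteq> p"
            proof
              assume rp: "r = p"
              have "pk k \<le> r" unfolding r_def using Mne pkS k
                by (intro cInf_greatest) (auto simp: Mk_def)
              then have "pk k = p" using rp pmin k by force
              moreover obtain S where "S \<in> Mk" using Mne by blast
              ultimately show False using False k by (auto simp: Mk_def)
            qed
            then have "p < r" using rge by simp
            then obtain Ga where Ga: "Ga \<in> F a" "Sup Ga < r" using lowk a by blast
            have ciGa: "closed_interval Ga" using Ga a intervals by blast
            have "p < Inf Ga" using noa Ga hR a ci_props(4)[OF ciGa, of p] by force
            have "\<forall>M\<in>Mk. Inf Ga \<in> M"
            proof
              fix M assume M: "M \<in> Mk"
              then have ciM: "closed_interval M" and pM: "p \<in> M" using k intervals by (auto simp: Mk_def)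
              have "r \<le> Sup M" unfolding r_def using M k hR
                by (intro cInf_lower) (auto simp: Mk_def bdd_below_def intro!: exI[of _ p])
              moreover have "Inf Ga \<le> Sup Ga" using ci_props(1)[OF ciGa] .
              moreover have "Inf M \<le> p" using pM ci_props(4)[OF ciM] by blast
              ultimately show "Inf Ga \<in> M" using ci_props(4)[OF ciM] \<open>p < Inf Ga\<close> Ga(2) by auto
            qed
            then show ?thesis using Ga(1) ci_props(3)[OF ciGa] Mk by blast
          qed
        qed
      qed
    qed
  qed
qed


theorem theorem7:
  fixes n :: nat and F :: "nat \<Rightarrow> real set set"
  assumes intervals: "\<forall>i\<in>{1..n+1}. \<forall>S\<in>F i. closed_interval S"
    and nonempty: "\<forall>i\<in>{1..n+1}. F i \<noteq> {}"
    and colorful: "\<forall>C. (\<forall>i\<in>{1..n+1}. C i \<in> F i) \<longrightarrow> pierceable n (C ` {1..n+1})"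
  shows "\<exists>i\<in>{1..n+1}. \<exists>G. (\<forall>k\<in>{1..n+1} - {i}. G k \<in> F k) \<and>
           pierceable n (F i \<union> G ` ({1..n+1} - {i}))"
  by (rule gen[OF _ _ intervals nonempty colorful]) auto

end
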